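(* Let $\Gamma$ be a countable discrete group and $\mu$ a symmetric probability measure on $\Gamma$. If $0\neq T\in\mathcal B(\ell^2(\Gamma))$ and $\lambda\in\mathbb T$ satisfy $\mathcal P_\mu(T)=\lambda T$, then $\lambda\in\{1,-1\}$.
   Context: $\rho$ denotes the right regular representation of $\Gamma$ on $\ell^2(\Gamma)$, $\rho_g\delta_x=\delta_{xg^{-1}}$. The Markov operator $\mathcal P_\mu:\mathcal B(\ell^2(\Gamma))\to\mathcal B(\ell^2(\Gamma))$ is $\mathcal P_\mu(T)=\sum_{g\in\Gamma}\mu(g)\rho_gT\rho_g^*$. $\mu$ is symmetric if $\mu(g)=\mu(g^{-1})$ for all $g\in\Gamma$. *)

theory Defs
  imports "HOL-Analysis.Analysis"
begin

text \<open>The group \<Gamma> is a type of class group_add (written additively, not assumed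
commutative) and countable.  Elements of l^2(\<Gamma>) are complex functions on \<Gamma>
with square-summable modulus.\<close>

definition l2 :: "('g \<Rightarrow> complex) set" where
  "l2 = {f. (\<lambda>x. (cmod (f x))^2) summable_on UNIV}"

definition l2norm :: "('g \<Rightarrow> complex) \<Rightarrow> real" where
  "l2norm f = sqrt (\<Sum>\<^sub>\<infinity>x. (cmod (f x))^2)"

text \<open>Bounded linear operators on l^2(\<Gamma>), represented by their action on l^2
(values outside l^2 are irrelevant).\<close>

definition bounded_op :: "(('g \<Rightarrow> complex) \<Rightarrow> ('g \<Rightarrow> complex)) \<Rightarrow> bool" where
  "bounded_op T \<longleftrightarrow>
     (\<forall>f\<in>l2. T f \<in> l2) \<and>
     (\<forall>f\<in>l2. \<forall>h\<in>l2. \<forall>a b. T (\<lambda>x. a * f x + b * h x) = (\<lambda>x. a * T f x + b * T h x)) \<and>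
     (\<exists>C. \<forall>f\<in>l2. l2norm (T f) \<le> C * l2norm f)"

text \<open>Right regular representation: rho_g delta_x = delta_{x g^{-1}},
i.e. (rho_g f)(y) = f(y g); its adjoint is rho_{g^{-1}}.\<close>

definition rho :: "'g::group_add \<Rightarrow> ('g \<Rightarrow> complex) \<Rightarrow> ('g \<Rightarrow> complex)" where
  "rho g f = (\<lambda>y. f (y + g))"

definition rho_adj :: "'g::group_add \<Rightarrow> ('g \<Rightarrow> complex) \<Rightarrow> ('g \<Rightarrow> complex)" where
  "rho_adj g f = (\<lambda>y. f (y - g))"

text \<open>Markov operator P_mu(T) = sum_g mu(g) rho_g T rho_g^*; the series converges
absolutely in operator norm, hence pointwise at every coordinate.\<close>

definition markov_op :: "('g::group_add \<Rightarrow> real) \<Rightarrow> (('g \<Rightarrow> complex) \<Rightarrow> ('g \<Rightarrow> complex))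
     \<Rightarrow> ('g \<Rightarrow> complex) \<Rightarrow> ('g \<Rightarrow> complex)" where
  "markov_op \<mu> T f = (\<lambda>x. \<Sum>\<^sub>\<infinity>g. complex_of_real (\<mu> g) * rho g (T (rho_adj g f)) x)"

definition prob_on_group :: "('g \<Rightarrow> real) \<Rightarrow> bool" where
  "prob_on_group \<mu> \<longleftrightarrow> (\<forall>g. \<mu> g \<ge> 0) \<and> (\<mu> has_sum 1) UNIV"

definition symmetric_measure :: "('g::group_add \<Rightarrow> real) \<Rightarrow> bool" where
  "symmetric_measure \<mu> \<longleftrightarrow> (\<forall>g. \<mu> g = \<mu> (- g))"

end

theory Submission
  imports Defs
begin

lemma cmod_diff_sq: "(cmod (w - c))^2 = (cmod w)^2 - 2 * Re (cnj c * w) + (cmod c)^2"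
  by (simp only: cmod_power2) (simp add: power2_eq_square algebra_simps)

lemma step:
  fixes \<mu> :: "'g::group_add \<Rightarrow> real" and u :: "'g \<Rightarrow> complex"
  assumes nn: "\<forall>g. \<mu> g \<ge> 0" and hs: "(\<mu> has_sum 1) UNIV"
    and bnd: "\<forall>h. cmod (u h) \<le> M"
    and eq: "(\<Sum>\<^sub>\<infinity>g. complex_of_real (\<mu> g) * u (h+g)) = c"
    and ca: "cmod c = a" and aM: "a \<le> M"
    and mpos: "\<mu> g0 > 0"
  shows "(cmod (u(h+g0) - c))^2 \<le> (M - a) * M * (1 + 2 / \<mu> g0)"
proof -
  define S where "S = (\<lambda>g. complex_of_real (\<mu> g) * u (h+g))"
  have "(\<lambda>g. M * \<mu> g) summable_on UNIV"
    using hs summable_on_cmult_right has_sum_imp_summable by blast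
  then have "(\<lambda>g. norm (S g)) summable_on UNIV"
    apply (rule summable_on_comparison_test)
      apply (auto simp: S_def norm_mult nn abs_of_nonneg)
    by (metis bnd nn mult.commute mult_right_mono)
  then have "S summable_on UNIV" by (rule abs_summable_summable)
  then have hsS: "(S has_sum c) UNIV" using eq S_def by (simp add: has_sum_iff)
  have bl: "bounded_linear (\<lambda>z. Re (cnj c * z))"
    by (rule bounded_linear_compose[OF bounded_linear_Re bounded_linear_mult_right])
  have h1: "((\<lambda>g. Re (cnj c * S g)) has_sum Re (cnj c * c)) UNIV"
    using has_sum_bounded_linear[OF bl hsS] .
  have cc: "Re (cnj c * c) = a^2" using ca cmod_power2[of c] by (simp add: power2_eq_square)
  have h2: "((\<lambda>g. \<mu> g * (a*M)) has_sum (1 * (a*M))) UNIV"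
    using has_sum_cmult_left[OF hs] .
  have h1': "((\<lambda>g. - Re (cnj c * S g)) has_sum - Re (cnj c * c)) UNIV"
    using h1 has_sum_uminus[of "\<lambda>g. Re (cnj c * S g)" UNIV "- Re (cnj c * c)"] by (simp only: minus_minus)
  define F where "F = (\<lambda>g. \<mu> g * (a*M) + - Re (cnj c * S g))"
  have hF: "(F has_sum (a*M - a^2)) UNIV"
  proof -
    have "a*M - a^2 = 1 * (a*M) + - Re (cnj c * c)" using cc by simp
    then show ?thesis using has_sum_add[OF h2 h1'] unfolding F_def by metis
  qed
  have a0: "a \<ge> 0" using ca by auto
  have Fnn: "F g \<ge> 0" for g
  proof -
    have "Re (cnj c * u (h+g)) \<le> cmod (cnj c * u (h+g))" by (rule complex_Re_le_cmod)
    also have "\<dots> \<le> a * M" using ca bnd a0 by (simp add: norm_mult mult_left_mono)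
    finally have "Re (cnj c * u (h+g)) \<le> a * M" .
    then have "\<mu> g * Re (cnj c * u (h+g)) \<le> \<mu> g * (a*M)" using nn by (simp add: mult_left_mono)
    then show ?thesis by (simp add: F_def S_def algebra_simps)
  qed
  have "((F has_sum F g0) {g0})" by (simp add: has_sum_finite[of "{g0}", simplified])
  then have "F g0 \<le> a*M - a^2"
    by (rule has_sum_mono_neutral[OF _ hF]) (auto simp: Fnn)
  then have k: "\<mu> g0 * (a*M - Re (cnj c * u (h+g0))) \<le> a * (M - a)"
    by (simp add: F_def S_def algebra_simps power2_eq_square)
  define w where "w = u (h+g0)"
  have wM: "cmod w \<le> M" using bnd w_def by auto
  have k2: "a*M - Re (cnj c * w) \<le> a * (M - a) / \<mu> g0"
    using k mpos w_def by (simp add: field_simps)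
  have "(cmod (w - c))^2 = (cmod w)^2 - 2 * Re (cnj c * w) + a^2" using cmod_diff_sq ca by simp
  also have "\<dots> \<le> M^2 - 2 * Re (cnj c * w) + a^2"
    using wM by (simp add: power_mono)
  also have "\<dots> \<le> (M-a)^2 + 2 * (a * (M - a) / \<mu> g0)"
  proof -
    have "(M-a)^2 = M^2 - 2*(a*M) + a^2" by (simp add: power2_diff algebra_simps)
    then show ?thesis using k2 by linarith
  qed
  also have "\<dots> \<le> (M - a) * M * (1 + 2 / \<mu> g0)"
  proof -
    have "(M-a)^2 \<le> (M-a)*M" using a0 aM by (simp add: power2_eq_square mult_left_mono)
    moreover have "a * (M - a) / \<mu> g0 \<le> M * (M-a) / \<mu> g0"
      using a0 aM mpos by (simp add: divide_right_mono mult_right_mono)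
    moreover have "(M - a) * M * (1 + 2 / \<mu> g0) = (M-a)*M + 2*(M*(M-a)/\<mu> g0)"
      using mpos by (simp add: field_simps)
    ultimately show ?thesis by linarith
  qed
  finally show ?thesis by (simp add: w_def)
qed

lemma core:
  fixes \<mu> :: "'g::group_add \<Rightarrow> real" and u :: "'g \<Rightarrow> complex"
  assumes nn: "\<forall>g. \<mu> g \<ge> 0" and hs: "(\<mu> has_sum 1) UNIV"
    and sym: "\<forall>g. \<mu> g = \<mu> (- g)"
    and bnd: "\<forall>h. cmod (u h) \<le> B"
    and nz: "u h0 \<noteq> 0"
    and lam1: "cmod lam = 1"
    and eqs: "\<forall>h. (\<Sum>\<^sub>\<infinity>g. complex_of_real (\<mu> g) * u (h+g)) = lam * u h"
  shows "lam = 1 \<or> lam = -1"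
proof -
  obtain g0 where mpos: "\<mu> g0 > 0"
  proof (rule ccontr)
    assume "\<not> thesis"
    have "\<forall>g. \<mu> g = 0"
    proof
      fix g
      have "\<not> \<mu> g > 0" using that \<open>\<not> thesis\<close> by blast
      then show "\<mu> g = 0" using nn[rule_format, of g] by linarith
    qed
    then have "(\<mu> has_sum 0) UNIV" by (simp add: has_sum_0)
    with hs show False using has_sum_unique by fastforce
  qed
  define m where "m = \<mu> g0"
  have mpos': "m > 0" using mpos m_def by simp
  have mneg: "\<mu> (- g0) = m" using sym m_def by simp
  define M where "M = (SUP h. cmod (u h))"
  have bdd: "bdd_above (range (\<lambda>h. cmod (u h)))" using bnd by (auto intro: bdd_aboveI)
  have uM: "cmod (u h) \<le> M" for h unfolding M_def by (rule cSUP_upper[OF _ bdd]) auto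
  have Mpos: "M > 0" using uM[of h0] nz by (meson less_le_trans zero_less_norm_iff)
  have approx: "\<exists>h. M - \<eta> < cmod (u h)" if "\<eta> > 0" for \<eta>
  proof -
    have "M - \<eta> < M" using that by simp
    then show ?thesis unfolding M_def using less_cSUP_iff[OF _ bdd] by auto
  qed
  define K where "K = M * (1 + 2 / m)"
  have Kpos: "K > 0" using Mpos mpos' by (simp add: K_def add_pos_pos)
  have bndM: "\<forall>h. cmod (u h) \<le> M" using uM by auto
  show ?thesis
  proof (rule ccontr)
    assume ne: "\<not> (lam = 1 \<or> lam = -1)"
    define d where "d = cmod (1 - lam^2)"
    have "lam^2 \<noteq> 1" using ne by (metis power2_eq_1_iff)
    then have dpos: "d > 0" unfolding d_def by simp
    define f where "f = (\<lambda>\<eta>::real. d*(M-\<eta>) - (sqrt(K*(\<eta> + sqrt(K*\<eta>))) + sqrt(K*\<eta>)))"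
    have "(f \<longlongrightarrow> d*(M-0) - (sqrt(K*(0 + sqrt(K*0))) + sqrt(K*0))) (at_right 0)"
      unfolding f_def by (intro tendsto_intros)
    then have "(f \<longlongrightarrow> d*M) (at_right 0)" by simp
    moreover have "d*M > 0" using dpos Mpos by simp
    ultimately have "eventually (\<lambda>\<eta>. f \<eta> > 0) (at_right 0)" by (rule order_tendstoD(1))
    then obtain b where b: "b > 0" "\<And>y. 0 < y \<Longrightarrow> y < b \<Longrightarrow> f y > 0"
      unfolding eventually_at_right[OF zero_less_one] by auto
    define \<eta> where "\<eta> = min (b/2) (M/2)"
    have eta: "\<eta> > 0" "\<eta> < M" "f \<eta> > 0" using b Mpos by (auto simp: \<eta>_def)
    obtain h where h: "M - \<eta> < cmod (u h)" using approx eta by blast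
    define a where "a = cmod (u h)"
    have aM: "a \<le> M" using uM a_def by simp
    have ca: "cmod (lam * u h) = a" using lam1 a_def by (simp add: norm_mult)
    define w where "w = u (h + g0)"
    have s1: "(cmod (w - lam * u h))^2 \<le> (M - a) * M * (1 + 2 / \<mu> g0)"
      unfolding w_def by (rule step[OF nn hs bndM eqs[rule_format] ca aM mpos])
    have "(M - a) * M * (1 + 2 / \<mu> g0) \<le> \<eta> * K"
      using h a_def aM Kpos by (simp add: K_def m_def mult_right_mono mult.assoc)
    with s1 have "(cmod (w - lam * u h))^2 \<le> K * \<eta>" by (simp add: mult.commute)
    then have e1: "cmod (w - lam * u h) \<le> sqrt (K * \<eta>)"
      using real_le_rsqrt by blast
    define a' where "a' = cmod w"
    have "cmod (lam * u h) - cmod (w - lam * u h) \<le> cmod w"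
      using norm_triangle_ineq2[of "lam*u h" w] norm_minus_commute[of "lam*u h" w] by linarith
    then have a'lo: "a' \<ge> a - sqrt (K * \<eta>)" using e1 ca a'_def by linarith
    have a'M: "a' \<le> M" using uM a'_def w_def by simp
    have ca': "cmod (lam * u (h+g0)) = a'" using lam1 a'_def w_def by (simp add: norm_mult)
    have s2: "(cmod (u (h + g0 + - g0) - lam * u (h+g0)))^2 \<le> (M - a') * M * (1 + 2 / \<mu> (- g0))"
      by (rule step[OF nn hs bndM eqs[rule_format, of "h+g0"] ca' a'M]) (simp add: mneg mpos')
    have "(M - a') * M * (1 + 2 / \<mu> (- g0)) \<le> K * (\<eta> + sqrt (K * \<eta>))"
    proof -
      have "M - a' \<le> \<eta> + sqrt (K * \<eta>)" using a'lo h a_def by linarith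
      then have "K * (M - a') \<le> K * (\<eta> + sqrt (K * \<eta>))" using Kpos by (simp add: mult_left_mono)
      moreover have "(M - a') * M * (1 + 2 / \<mu> (- g0)) = K * (M - a')" by (simp add: K_def mneg)
      ultimately show ?thesis by (simp only:)
    qed
    with s2 have "(cmod (u h - lam * w))^2 \<le> K * (\<eta> + sqrt (K * \<eta>))" by (simp add: add.assoc w_def)
    then have e2: "cmod (u h - lam * w) \<le> sqrt (K * (\<eta> + sqrt (K * \<eta>)))"
      using real_le_rsqrt by blast
    have "(1 - lam^2) * u h = (u h - lam * w) + lam * (w - lam * u h)"
      by (simp add: algebra_simps power2_eq_square)
    then have "cmod ((1 - lam^2) * u h) \<le> cmod (u h - lam * w) + cmod (lam * (w - lam * u h))"
      by (metis norm_triangle_ineq)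
    also have "cmod (lam * (w - lam * u h)) = cmod (w - lam * u h)" using lam1 by (simp add: norm_mult)
    finally have "d * a \<le> sqrt (K * (\<eta> + sqrt (K * \<eta>))) + sqrt (K * \<eta>)"
      using e1 e2 by (simp add: norm_mult d_def a_def)
    moreover have "d * (M - \<eta>) < d * a" using h a_def dpos by simp
    ultimately have "f \<eta> < 0" unfolding f_def by linarith
    with eta show False by simp
  qed
qed

lemma bij_shift: "bij_betw (\<lambda>y::'g::group_add. y - h) UNIV UNIV"
  by (rule bij_betwI[where g="\<lambda>y. y + h"]) (auto simp: algebra_simps)

lemma shift_l2:
  fixes f :: "'g::group_add \<Rightarrow> complex"
  assumes "f \<in> l2"
  shows "rho_adj h f \<in> l2" "l2norm (rho_adj h f) = l2norm f"
proof -
  show "rho_adj h f \<in> l2" using assms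
    summable_on_reindex_bij_betw[OF bij_shift, of "\<lambda>x. (cmod (f x))^2" h]
    by (simp add: l2_def rho_adj_def)
  show "l2norm (rho_adj h f) = l2norm f"
    using infsum_reindex_bij_betw[OF bij_shift, of "\<lambda>x. (cmod (f x))^2" h]
    by (simp add: l2norm_def rho_adj_def)
qed

lemma pt_le:
  fixes f :: "'g \<Rightarrow> complex"
  assumes "f \<in> l2"
  shows "cmod (f y) \<le> l2norm f"
proof -
  have "(\<Sum>\<^sub>\<infinity>x\<in>{y}. (cmod (f x))^2) \<le> (\<Sum>\<^sub>\<infinity>x. (cmod (f x))^2)"
    by (rule infsum_mono_neutral) (use assms in \<open>auto simp: l2_def\<close>)
  then have "(cmod (f y))^2 \<le> (\<Sum>\<^sub>\<infinity>x. (cmod (f x))^2)" by simp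
  then show ?thesis unfolding l2norm_def using real_le_rsqrt by blast
qed

lemma gd: "(y::'g::group_add) - g - h = y - (h + g)"
  by (metis add.assoc diff_conv_add_uminus minus_add)

lemma rho_adj_comp: "rho_adj g (rho_adj h f) = rho_adj (h + g) (f :: 'g::group_add \<Rightarrow> complex)"
  unfolding rho_adj_def by (simp only: gd)

theorem theorem2p3:
  fixes \<mu> :: "'g::{group_add, countable} \<Rightarrow> real"
    and T :: "('g \<Rightarrow> complex) \<Rightarrow> ('g \<Rightarrow> complex)"
    and lam :: complex
  assumes "prob_on_group \<mu>"
    and "symmetric_measure \<mu>"
    and "bounded_op T"
    and "\<exists>f\<in>l2. T f \<noteq> (\<lambda>_. 0)"
    and "cmod lam = 1"
    and "\<forall>f\<in>l2. markov_op \<mu> T f = (\<lambda>x. lam * T f x)"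
  shows "lam = 1 \<or> lam = -1"
proof -
  obtain f where f: "f \<in> l2" "T f \<noteq> (\<lambda>_. 0)" using assms(4) by blast
  then obtain x where x: "T f x \<noteq> 0" by auto
  obtain C where C: "\<forall>f\<in>l2. l2norm (T f) \<le> C * l2norm f"
    using assms(3) unfolding bounded_op_def by blast
  have Tl2: "\<forall>f\<in>l2. T f \<in> l2" using assms(3) unfolding bounded_op_def by blast
  define u where "u = (\<lambda>h. T (rho_adj h f) (x + h))"
  have nz: "u 0 \<noteq> 0" using x by (simp add: u_def rho_adj_def)
  have bnd: "\<forall>h. cmod (u h) \<le> C * l2norm f"
  proof
    fix h
    have r: "rho_adj h f \<in> l2" using shift_l2 f by blast
    have "cmod (u h) \<le> l2norm (T (rho_adj h f))" unfolding u_def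
      by (rule pt_le) (use Tl2 r in blast)
    also have "\<dots> \<le> C * l2norm (rho_adj h f)" using C r by blast
    also have "\<dots> = C * l2norm f" using shift_l2(2)[OF f(1)] by simp
    finally show "cmod (u h) \<le> C * l2norm f" .
  qed
  have eqs: "\<forall>h. (\<Sum>\<^sub>\<infinity>g. complex_of_real (\<mu> g) * u (h+g)) = lam * u h"
  proof
    fix h
    have r: "rho_adj h f \<in> l2" using shift_l2 f by blast
    have "markov_op \<mu> T (rho_adj h f) (x + h) = lam * T (rho_adj h f) (x + h)"
      using assms(6) r by simp
    then show "(\<Sum>\<^sub>\<infinity>g. complex_of_real (\<mu> g) * u (h+g)) = lam * u h"
      by (simp add: markov_op_def rho_def rho_adj_comp u_def add.assoc)
  qed
  show ?thesis
    by (rule core[OF _ _ _ bnd nz assms(5) eqs])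
       (use assms(1,2) in \<open>auto simp: prob_on_group_def symmetric_measure_def\<close>)
qed

end
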